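(* Let $K$ be a superfield and $f(X),g(X)\in K[X]$ with $g(X)\ne0$. Then there exist $q(X),r(X)\in K[X]$ such that $f(X)\in q(X)g(X)+r(X)$ and either $r(X)=0$ or $\deg r(X)<\deg g(X)$.
   Context: Multivalued operations are extended to subsets by unions. A superring is a structure $(S,+,\cdot,-,0,1)$ with multivalued addition and multiplication such that $(S,+,-,0)$ is a commutative multigroup, $(S,\cdot,1)$ is a commutative multimonoid, $a\cdot0=\{0\}$, $c(a+b)\subseteq ca+cb$, and $-(ab)=(-a)b=a(-b)$ (multigroup axioms: $c\in ab\Rightarrow a\in c\,r(b)$ and $b\in r(a)c$; $b\in a\cdot1\iff a=b$; $(ab)c\subseteq a(bc)$; $ab=ba$; multimonoid: the last two and $a\in 1\cdot a$). A superdomain is a nontrivial superring in which $0\in ab$ iff $a=0$ or $b=0$. A superfield is a superdomain in which for every $a\ne0$ there exists $b$ with $1\in ab$. The superring of polynomials $R[X]$ is the set of finitely supported sequences $(a_n)_{n\in\omega}$ with $(c_n)\in(a_n)+(b_n)$ iff $c_n\in a_n+b_n$ for all $n$, and $(c_n)\in(a_n)\cdot(b_n)$ iff $c_n\in a_0b_n+a_1b_{n-1}+\dots+a_nb_0$ for all $n$; $-(a_n)=(-a_n)$, $0=(0,0,\dots)$, $1=(1,0,\dots)$. The degree of a nonzero polynomial is the largest $n$ with $a_n\ne0$. *)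

theory Defs
  imports Main
begin

text \<open>A structure with multivalued addition and multiplication on an ambient type
  (the whole type is the carrier).\<close>
record 'a hyperstr =
  hadd  :: "'a \<Rightarrow> 'a \<Rightarrow> 'a set"
  hmul  :: "'a \<Rightarrow> 'a \<Rightarrow> 'a set"
  hneg  :: "'a \<Rightarrow> 'a"
  hzero :: 'a
  hone  :: 'a

definition set_op :: "('a \<Rightarrow> 'a \<Rightarrow> 'a set) \<Rightarrow> 'a set \<Rightarrow> 'a set \<Rightarrow> 'a set" where
  "set_op op A B = (\<Union>a\<in>A. \<Union>b\<in>B. op a b)"

definition comm_multigroup ::
  "('a \<Rightarrow> 'a \<Rightarrow> 'a set) \<Rightarrow> ('a \<Rightarrow> 'a) \<Rightarrow> 'a \<Rightarrow> bool" where
  "comm_multigroup op r e \<longleftrightarrow>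
     (\<forall>a b c. c \<in> op a b \<longrightarrow> a \<in> op c (r b) \<and> b \<in> op (r a) c) \<and>
     (\<forall>a b. b \<in> op a e \<longleftrightarrow> a = b) \<and>
     (\<forall>a b c. set_op op (op a b) {c} \<subseteq> set_op op {a} (op b c)) \<and>
     (\<forall>a b. op a b = op b a)"

definition comm_multimonoid :: "('a \<Rightarrow> 'a \<Rightarrow> 'a set) \<Rightarrow> 'a \<Rightarrow> bool" where
  "comm_multimonoid op e \<longleftrightarrow>
     (\<forall>a b c. set_op op (op a b) {c} \<subseteq> set_op op {a} (op b c)) \<and>
     (\<forall>a b. op a b = op b a) \<and>
     (\<forall>a. a \<in> op e a)"

definition superring :: "('a, 'b) hyperstr_scheme \<Rightarrow> bool" where
  "superring S \<longleftrightarrow>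
     comm_multigroup (hadd S) (hneg S) (hzero S) \<and>
     comm_multimonoid (hmul S) (hone S) \<and>
     (\<forall>a. hmul S a (hzero S) = {hzero S}) \<and>
     (\<forall>a b c. set_op (hmul S) {c} (hadd S a b)
               \<subseteq> set_op (hadd S) (hmul S c a) (hmul S c b)) \<and>
     (\<forall>a b. hneg S ` hmul S a b = hmul S (hneg S a) b \<and>
            hmul S (hneg S a) b = hmul S a (hneg S b))"

definition superdomain :: "('a, 'b) hyperstr_scheme \<Rightarrow> bool" where
  "superdomain S \<longleftrightarrow> superring S \<and> hzero S \<noteq> hone S \<and>
     (\<forall>a b. hzero S \<in> hmul S a b \<longleftrightarrow> a = hzero S \<or> b = hzero S)"

definition superfield :: "('a, 'b) hyperstr_scheme \<Rightarrow> bool" where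
  "superfield S \<longleftrightarrow> superdomain S \<and>
     (\<forall>a. a \<noteq> hzero S \<longrightarrow> (\<exists>b. hone S \<in> hmul S a b))"

definition is_poly :: "('a, 'b) hyperstr_scheme \<Rightarrow> (nat \<Rightarrow> 'a) \<Rightarrow> bool" where
  "is_poly S p \<longleftrightarrow> finite {n. p n \<noteq> hzero S}"

definition poly_zero :: "('a, 'b) hyperstr_scheme \<Rightarrow> nat \<Rightarrow> 'a" where
  "poly_zero S = (\<lambda>n. hzero S)"

definition poly_add :: "('a, 'b) hyperstr_scheme \<Rightarrow> (nat \<Rightarrow> 'a) \<Rightarrow> (nat \<Rightarrow> 'a) \<Rightarrow> (nat \<Rightarrow> 'a) set" where
  "poly_add S a b = {c. is_poly S c \<and> (\<forall>n. c n \<in> hadd S (a n) (b n))}"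

fun conv_sum :: "('a, 'b) hyperstr_scheme \<Rightarrow> (nat \<Rightarrow> 'a) \<Rightarrow> (nat \<Rightarrow> 'a) \<Rightarrow> nat \<Rightarrow> nat \<Rightarrow> 'a set" where
  "conv_sum S a b n 0 = hmul S (a 0) (b n)"
| "conv_sum S a b n (Suc k) = set_op (hadd S) (conv_sum S a b n k) (hmul S (a (Suc k)) (b (n - Suc k)))"

definition poly_mul :: "('a, 'b) hyperstr_scheme \<Rightarrow> (nat \<Rightarrow> 'a) \<Rightarrow> (nat \<Rightarrow> 'a) \<Rightarrow> (nat \<Rightarrow> 'a) set" where
  "poly_mul S a b = {c. is_poly S c \<and> (\<forall>n. c n \<in> conv_sum S a b n n)}"

definition poly_deg :: "('a, 'b) hyperstr_scheme \<Rightarrow> (nat \<Rightarrow> 'a) \<Rightarrow> nat" where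
  "poly_deg S p = (GREATEST n. p n \<noteq> hzero S)"

end

theory Submission
  imports Defs
begin

lemma set_op_iff: "x \<in> set_op op A B \<longleftrightarrow> (\<exists>a\<in>A. \<exists>b\<in>B. x \<in> op a b)"
  unfolding set_op_def by blast

lemma set_op_mono: "A \<subseteq> A' \<Longrightarrow> B \<subseteq> B' \<Longrightarrow> set_op op A B \<subseteq> set_op op A' B'"
  unfolding set_op_def by blast

fun csum :: "('a \<Rightarrow> 'a \<Rightarrow> 'a set) \<Rightarrow> (nat \<Rightarrow> 'a set) \<Rightarrow> nat \<Rightarrow> 'a set" where
  "csum op T 0 = T 0"
| "csum op T (Suc k) = set_op op (csum op T k) (T (Suc k))"

fun tsum :: "('a \<Rightarrow> 'a \<Rightarrow> 'a set) \<Rightarrow> 'a \<Rightarrow> (nat \<Rightarrow> 'a set) \<Rightarrow> nat \<Rightarrow> nat \<Rightarrow> 'a set" where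
  "tsum op z T j 0 = {z}"
| "tsum op z T j (Suc d) = set_op op (tsum op z T j d) (T (j + Suc d))"

lemma conv_csum: "conv_sum K a b n k = csum (hadd K) (\<lambda>i. hmul K (a i) (b (n - i))) k"
  by (induction k) auto

lemma csum_cong: "(\<And>i. i \<le> k \<Longrightarrow> T i = T' i) \<Longrightarrow> csum op T k = csum op T' k"
  by (induction k) auto

lemma tsum_cong: "(\<And>e. 0 < e \<Longrightarrow> e \<le> d \<Longrightarrow> T (j + e) = T' (j + e)) \<Longrightarrow> tsum op z T j d = tsum op z T' j d"
proof (induction d)
  case (Suc d)
  have "T (j + Suc d) = T' (j + Suc d)" using Suc.prems[of "Suc d"] by simp
  then show ?case using Suc by simp
qed simp

locale sfield =
  fixes K :: "('a, 'b) hyperstr_scheme"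
  assumes sf: "superfield K"
begin

lemma sr: "superring K"
  using sf unfolding superfield_def superdomain_def by simp

lemma cmg: "comm_multigroup (hadd K) (hneg K) (hzero K)"
  using sr unfolding superring_def by simp

lemma cmm: "comm_multimonoid (hmul K) (hone K)"
  using sr unfolding superring_def by simp

lemma add_comm: "hadd K a b = hadd K b a"
  using cmg unfolding comm_multigroup_def by simp

lemma add_zero: "hadd K a (hzero K) = {a}"
  using cmg unfolding comm_multigroup_def by auto

lemma add_rev: "c \<in> hadd K a b \<Longrightarrow> a \<in> hadd K c (hneg K b) \<and> b \<in> hadd K (hneg K a) c"
  using cmg unfolding comm_multigroup_def by simp

lemma add_assoc1: "set_op (hadd K) (hadd K a b) {c} \<subseteq> set_op (hadd K) {a} (hadd K b c)"
  using cmg unfolding comm_multigroup_def by simp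

lemma mul_comm: "hmul K a b = hmul K b a"
  using cmm unfolding comm_multimonoid_def by simp

lemma mul_one: "a \<in> hmul K (hone K) a"
  using cmm unfolding comm_multimonoid_def by blast

lemma mul_assoc1: "set_op (hmul K) (hmul K a b) {c} \<subseteq> set_op (hmul K) {a} (hmul K b c)"
  using cmm unfolding comm_multimonoid_def by simp

lemma mul_zero: "hmul K a (hzero K) = {hzero K}"
  using sr unfolding superring_def by simp

lemma inv: "a \<noteq> hzero K \<Longrightarrow> \<exists>b. hone K \<in> hmul K a b"
  using sf unfolding superfield_def by simp

lemma zero_add: "hadd K (hzero K) a = {a}"
  using add_comm add_zero by metis

lemma zero_mul: "hmul K (hzero K) a = {hzero K}"
  using mul_comm mul_zero by metis

lemma zero_neg_self: "hzero K \<in> hadd K (hneg K x) x"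
proof -
  have "x \<in> hadd K x (hzero K)" using add_zero by simp
  then show ?thesis using add_rev by blast
qed

lemma neg_neg: "hneg K (hneg K x) = x"
proof -
  have "x \<in> hadd K (hneg K (hneg K x)) (hzero K)"
    using add_rev[OF zero_neg_self[of x]] by blast
  then show ?thesis using add_zero by simp
qed

lemma add_ne: "hadd K b a \<noteq> {}"
proof -
  have "a \<in> set_op (hadd K) (hadd K (hneg K b) b) {a}"
    using zero_neg_self[of b] zero_add[of a] unfolding set_op_def by blast
  then have "a \<in> set_op (hadd K) {hneg K b} (hadd K b a)" using add_assoc1 by blast
  then show ?thesis unfolding set_op_def by blast
qed

lemma sub_ex: "\<exists>t. c \<in> hadd K t s"
proof -
  obtain t where "t \<in> hadd K c (hneg K s)" using add_ne by blast
  then have "c \<in> hadd K t (hneg K (hneg K s))" using add_rev by blast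
  then show ?thesis using neg_neg by metis
qed

lemma sub_ex2: "\<exists>r. c \<in> hadd K p r"
  using sub_ex add_comm by metis

lemma mul_ne: "hmul K x y \<noteq> {}"
proof (cases "y = hzero K")
  case True then show ?thesis using mul_zero by simp
next
  case False
  then obtain y' where "hone K \<in> hmul K y y'" using inv by blast
  then have "hone K \<in> hmul K y' y" using mul_comm by metis
  then have "x \<in> set_op (hmul K) (hmul K y' y) {x}" using mul_one[of x] unfolding set_op_def by blast
  then have "x \<in> set_op (hmul K) {y'} (hmul K y x)" using mul_assoc1 by blast
  then show ?thesis using mul_comm unfolding set_op_def by fastforce
qed

lemma div_ex: "b \<noteq> hzero K \<Longrightarrow> \<exists>x. t \<in> hmul K x b"
proof -
  assume "b \<noteq> hzero K"
  then obtain b' where "hone K \<in> hmul K b b'" using inv by blast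
  then have "t \<in> set_op (hmul K) (hmul K b b') {t}" using mul_one[of t] unfolding set_op_def by blast
  then have "t \<in> set_op (hmul K) {b} (hmul K b' t)" using mul_assoc1 by blast
  then show ?thesis using mul_comm unfolding set_op_def by fastforce
qed

lemma sassoc: "set_op (hadd K) (set_op (hadd K) A B) C = set_op (hadd K) A (set_op (hadd K) B C)"
proof
  show "set_op (hadd K) (set_op (hadd K) A B) C \<subseteq> set_op (hadd K) A (set_op (hadd K) B C)"
  proof
    fix x assume "x \<in> set_op (hadd K) (set_op (hadd K) A B) C"
    then obtain a b c y where abc: "a \<in> A" "b \<in> B" "c \<in> C" "y \<in> hadd K a b" "x \<in> hadd K y c"
      unfolding set_op_def by blast
    then have "x \<in> set_op (hadd K) (hadd K a b) {c}" unfolding set_op_def by blast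
    then have "x \<in> set_op (hadd K) {a} (hadd K b c)" using add_assoc1 by blast
    then show "x \<in> set_op (hadd K) A (set_op (hadd K) B C)" using abc unfolding set_op_def by blast
  qed
next
  show "set_op (hadd K) A (set_op (hadd K) B C) \<subseteq> set_op (hadd K) (set_op (hadd K) A B) C"
  proof
    fix x assume "x \<in> set_op (hadd K) A (set_op (hadd K) B C)"
    then obtain a b c z where abc: "a \<in> A" "b \<in> B" "c \<in> C" "z \<in> hadd K b c" "x \<in> hadd K a z"
      unfolding set_op_def by blast
    then have "x \<in> set_op (hadd K) (hadd K c b) {a}" using add_comm unfolding set_op_def by blast
    then have "x \<in> set_op (hadd K) {c} (hadd K b a)" using add_assoc1 by blast
    then obtain w where "w \<in> hadd K a b" "x \<in> hadd K w c" using add_comm unfolding set_op_def by blast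
    then show "x \<in> set_op (hadd K) (set_op (hadd K) A B) C" using abc unfolding set_op_def by blast
  qed
qed

lemma set_op_zero: "set_op (hadd K) X {hzero K} = X"
  unfolding set_op_def by (simp add: add_zero)

lemma zero_set_op: "set_op (hadd K) {hzero K} X = X"
  unfolding set_op_def by (simp add: zero_add)

lemma set_op_ne: "A \<noteq> {} \<Longrightarrow> B \<noteq> {} \<Longrightarrow> set_op (hadd K) A B \<noteq> {}"
proof -
  assume "A \<noteq> {}" "B \<noteq> {}"
  then obtain a b where "a \<in> A" "b \<in> B" by blast
  moreover obtain x where "x \<in> hadd K a b" using add_ne[of a b] by blast
  ultimately show ?thesis unfolding set_op_def by blast
qed

lemma csum_split: "set_op (hadd K) (csum (hadd K) T j) (tsum (hadd K) (hzero K) T j d) \<subseteq> csum (hadd K) T (j + d)"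
proof (induction d)
  case 0 then show ?case using set_op_zero by simp
next
  case (Suc d)
  have "set_op (hadd K) (csum (hadd K) T j) (tsum (hadd K) (hzero K) T j (Suc d))
     = set_op (hadd K) (set_op (hadd K) (csum (hadd K) T j) (tsum (hadd K) (hzero K) T j d)) (T (j + Suc d))"
    using sassoc by simp
  also have "\<dots> \<subseteq> set_op (hadd K) (csum (hadd K) T (j + d)) (T (j + Suc d))"
    using Suc set_op_mono by blast
  finally show ?case by simp
qed

lemma csum_zero: "(\<And>i. i \<le> k \<Longrightarrow> T i = {hzero K}) \<Longrightarrow> csum (hadd K) T k = {hzero K}"
  by (induction k) (simp_all add: set_op_zero)

lemma csum_prefix: "(\<And>i. i < k \<Longrightarrow> T i = {hzero K}) \<Longrightarrow> csum (hadd K) T k = T k"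
proof (cases k)
  case 0 then show ?thesis by simp
next
  case (Suc j)
  assume h: "\<And>i. i < k \<Longrightarrow> T i = {hzero K}"
  have "csum (hadd K) T j = {hzero K}" by (rule csum_zero) (use h Suc in auto)
  then show ?thesis using Suc zero_set_op by simp
qed

lemma csum_ne: "(\<And>i. T i \<noteq> {}) \<Longrightarrow> csum (hadd K) T k \<noteq> {}"
  by (induction k) (simp_all add: set_op_ne)

lemma tsum_ne: "(\<And>i. T i \<noteq> {}) \<Longrightarrow> tsum (hadd K) z T j d \<noteq> {}"
  by (induction d) (simp_all add: set_op_ne)

lemma main:
  fixes f g :: "nat \<Rightarrow> 'a"
  assumes fp: "is_poly K f" and gp: "is_poly K g"
    and gnz: "g \<noteq> poly_zero K"
  shows "\<exists>q r. is_poly K q \<and> is_poly K r \<and>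
           f \<in> set_op (poly_add K) (poly_mul K q g) {r} \<and>
           (r = poly_zero K \<or> poly_deg K r < poly_deg K g)"
proof -
  define m where "m = poly_deg K g"
  obtain Bg where Bg: "\<And>l. g l \<noteq> hzero K \<Longrightarrow> l \<le> Bg"
    using gp unfolding is_poly_def finite_nat_set_iff_bounded_le by blast
  have ex: "\<exists>l. g l \<noteq> hzero K" using gnz unfolding poly_zero_def by auto
  have gm: "g m \<noteq> hzero K" unfolding m_def poly_deg_def
    by (rule GreatestI_ex_nat[OF ex]) (rule Bg)
  have gbig: "g l = hzero K" if "l > m" for l
  proof (rule ccontr)
    assume "g l \<noteq> hzero K"
    then have "l \<le> m" unfolding m_def poly_deg_def by (rule Greatest_le_nat) (rule Bg)
    then show False using that by simp
  qed
  obtain n where fn: "\<And>k. f k \<noteq> hzero K \<Longrightarrow> k \<le> n"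
    using fp unfolding is_poly_def finite_nat_set_iff_bounded_le by blast
  define T where "T q k = (\<lambda>i. hmul K (q i) (g (k - i)))" for q :: "nat \<Rightarrow> 'a" and k
  have conv: "conv_sum K q g k k = csum (hadd K) (T q k) k" for q k
    unfolding T_def by (rule conv_csum)
  have Tz: "T q k i = {hzero K}" if "i + m < k" for q k i
    unfolding T_def using gbig[of "k - i"] that mul_zero by simp
  have Tne: "T q k i \<noteq> {}" for q k i unfolding T_def by (rule mul_ne)
  define P where "P i = (\<exists>q. (\<forall>l. n < l \<or> l < i \<longrightarrow> q l = hzero K) \<and>
      (\<forall>k. i + m \<le> k \<longrightarrow> k \<le> n + m \<longrightarrow> f k \<in> csum (hadd K) (T q k) k))" for i
  have P0: "P (n + 1)" unfolding P_def by (rule exI[of _ "\<lambda>_. hzero K"]) simp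
  have step: "P i" if st: "i \<le> n" "P (Suc i)" for i
  proof -
    obtain q where qs: "\<And>l. n < l \<or> l < Suc i \<Longrightarrow> q l = hzero K"
      and qf: "\<And>k. Suc i + m \<le> k \<Longrightarrow> k \<le> n + m \<Longrightarrow> f k \<in> csum (hadd K) (T q k) k"
      using st(2) unfolding P_def by blast
    define k0 where "k0 = i + m"
    have "tsum (hadd K) (hzero K) (T q k0) i m \<noteq> {}" by (rule tsum_ne) (rule Tne)
    then obtain s where s: "s \<in> tsum (hadd K) (hzero K) (T q k0) i m" by blast
    obtain t where t: "f k0 \<in> hadd K t s" using sub_ex by blast
    obtain x where x: "t \<in> hmul K x (g m)" using div_ex[OF gm] by blast
    define q' where "q' = q(i := x)"
    have A: "\<forall>l. n < l \<or> l < i \<longrightarrow> q' l = hzero K"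
      unfolding q'_def using qs \<open>i \<le> n\<close> by auto
    have B: "f k \<in> csum (hadd K) (T q' k) k" if kb: "i + m \<le> k" "k \<le> n + m" for k
    proof (cases "k = k0")
      case False
      then have k: "Suc i + m \<le> k" using kb k0_def by simp
      have "csum (hadd K) (T q' k) k = csum (hadd K) (T q k) k"
      proof (rule csum_cong)
        fix j assume "j \<le> k"
        show "T q' k j = T q k j"
        proof (cases "j = i")
          case True then show ?thesis using Tz[of j k] k by simp
        next
          case False then show ?thesis unfolding T_def q'_def by simp
        qed
      qed
      then show ?thesis using qf[OF k kb(2)] by simp
    next
      case True
      have c1: "csum (hadd K) (T q' k0) i = T q' k0 i"
        by (rule csum_prefix) (rule Tz, simp add: k0_def)
      have c2: "T q' k0 i = hmul K x (g m)" unfolding T_def q'_def k0_def by simp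
      have c3: "tsum (hadd K) (hzero K) (T q' k0) i m = tsum (hadd K) (hzero K) (T q k0) i m"
        by (rule tsum_cong) (simp add: T_def q'_def)
      have "f k0 \<in> set_op (hadd K) (csum (hadd K) (T q' k0) i) (tsum (hadd K) (hzero K) (T q' k0) i m)"
        unfolding c1 c2 c3 set_op_def using s t x by blast
      also have "\<dots> \<subseteq> csum (hadd K) (T q' k0) k0"
        using csum_split[of "T q' k0" i m] unfolding k0_def by simp
      finally show ?thesis using True by simp
    qed
    show ?thesis unfolding P_def using A B by blast
  qed
  have Pd: "P (n + 1 - d)" if "d \<le> n + 1" for d
    using that
  proof (induction d)
    case 0 then show ?case using P0 by simp
  next
    case (Suc d)
    have "Suc (n + 1 - Suc d) = n + 1 - d" using Suc.prems by simp
    then show ?case using step[of "n + 1 - Suc d"] Suc by simp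
  qed
  obtain q where qs: "\<And>l. n < l \<Longrightarrow> q l = hzero K"
    and qf0: "\<And>k. m \<le> k \<Longrightarrow> k \<le> n + m \<Longrightarrow> f k \<in> csum (hadd K) (T q k) k"
    using Pd[of "n+1"] unfolding P_def by auto
  have qf: "f k \<in> csum (hadd K) (T q k) k" if "m \<le> k" for k
  proof (cases "k \<le> n + m")
    case True then show ?thesis using qf0 that by simp
  next
    case False
    then have fk: "f k = hzero K" using fn by fastforce
    have "csum (hadd K) (T q k) k = {hzero K}"
    proof (rule csum_zero)
      fix i assume "i \<le> k"
      show "T q k i = {hzero K}"
      proof (cases "i \<le> n")
        case True then show ?thesis using Tz False by simp
      next
        case False then show ?thesis using qs[of i] zero_mul unfolding T_def by simp
      qed
    qed
    then show ?thesis using fk by simp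
  qed
  define Pm where "Pm k = (if k < m then (SOME p. p \<in> csum (hadd K) (T q k) k) else f k)" for k
  define r where "r k = (if k < m then (SOME r. f k \<in> hadd K (Pm k) r) else hzero K)" for k
  have Pm_in: "Pm k \<in> csum (hadd K) (T q k) k" for k
  proof (cases "k < m")
    case True
    have "csum (hadd K) (T q k) k \<noteq> {}" by (rule csum_ne) (rule Tne)
    then show ?thesis unfolding Pm_def using True by (simp add: some_in_eq)
  next
    case False then show ?thesis unfolding Pm_def using qf by simp
  qed
  have r_in: "f k \<in> hadd K (Pm k) (r k)" for k
  proof (cases "k < m")
    case True
    then show ?thesis unfolding r_def using someI_ex[OF sub_ex2[of "f k" "Pm k"]] by simp
  next
    case False then show ?thesis unfolding r_def Pm_def by (simp add: add_zero)
  qed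
  have q_poly: "is_poly K q" unfolding is_poly_def
    by (rule finite_subset[of _ "{..n}"]) (use qs in \<open>auto simp: not_le[symmetric]\<close>)
  have r_poly: "is_poly K r" unfolding is_poly_def
    by (rule finite_subset[of _ "{..<m}"]) (auto simp: r_def split: if_splits)
  have Pm_poly: "is_poly K Pm" unfolding is_poly_def
    by (rule finite_subset[of _ "{..<m} \<union> {l. f l \<noteq> hzero K}"])
       (use fp in \<open>auto simp: Pm_def is_poly_def split: if_splits\<close>)
  have "Pm \<in> poly_mul K q g" unfolding poly_mul_def using Pm_poly Pm_in conv by simp
  moreover have "f \<in> poly_add K Pm r" unfolding poly_add_def using fp r_in by simp
  ultimately have fin: "f \<in> set_op (poly_add K) (poly_mul K q g) {r}"
    unfolding set_op_def by blast
  have deg: "r = poly_zero K \<or> poly_deg K r < m"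
  proof (cases "r = poly_zero K")
    case False
    then have exr: "\<exists>l. r l \<noteq> hzero K" unfolding poly_zero_def by auto
    have rb: "l < m" if "r l \<noteq> hzero K" for l
      using that unfolding r_def by (auto split: if_splits)
    have "r (poly_deg K r) \<noteq> hzero K" unfolding poly_deg_def
      by (rule GreatestI_ex_nat[OF exr]) (rule less_imp_le, rule rb)
    then show ?thesis using rb by blast
  qed simp
  show ?thesis using q_poly r_poly fin deg unfolding m_def by blast
qed

end

theorem theorem3p5:
  fixes K :: "('a, 'b) hyperstr_scheme" and f g :: "nat \<Rightarrow> 'a"
  assumes "superfield K"
    and "is_poly K f" and "is_poly K g"
    and "g \<noteq> poly_zero K"
  shows "\<exists>q r. is_poly K q \<and> is_poly K r \<and>
           f \<in> set_op (poly_add K) (poly_mul K q g) {r} \<and>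
           (r = poly_zero K \<or> poly_deg K r < poly_deg K g)"
  using sfield.main[OF sfield.intro[OF assms(1)] assms(2-4)] .

end
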